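(* Let $g:\mathbb{Z}_{\ge 0}\to\mathbb{R}$ be a linearly progressing opponent process (LPOP) with switching time $\tau_0\ge 1$ (so $g(0)>0$) and constant $\alpha\in[0,1)$. Let $T\ge 1$ be an integer, let $y_{\min}\in\mathbb{R}$, and let $(y^{\mathrm{nat}}_t)_{t\ge 0}$ be an arbitrary real sequence (the natural progression). For a dosing sequence $u=(u_0,\dots,u_{T-1})$ of nonnegative reals, define the well-being sequence by $y_0=y^{\mathrm{nat}}_0$ and $$y_{t+1}=\sum_{k=0}^{t} g(k)\,u_{t-k}+y^{\mathrm{nat}}_{t+1},\qquad t=0,\dots,T-1.$$ Let $u^{\mathrm{MED}}$ be the dosing sequence in which, for each $t=0,\dots,T-1$ in turn, $u^{\mathrm{MED}}_t$ is the minimum effective dose given the previous doses $u^{\mathrm{MED}}_0,\dots,u^{\mathrm{MED}}_{t-1}$, i.e. $$u^{\mathrm{MED}}_t=\max\left\{0,\ \frac{y_{\min}-y^{\mathrm{nat}}_{t+1}-\sum_{k=1}^{t} g(k)\,u^{\mathrm{MED}}_{t-k}}{g(0)}\right\}.$$ Then the well-being sequence produced by $u^{\mathrm{MED}}$ satisfies $y_t\ge y_{\min}$ for all $t=1,\dots,T$, and for every nonnegative dosing sequence $u'=(u'_0,\dots,u'_{T-1})$ whose well-being sequence satisfies $y'_t\ge y_{\min}$ for all $t=1,\dots,T$, we have $\sum_{t=0}^{T-1}u^{\mathrm{MED}}_t\le\sum_{t=0}^{T-1}u'_t$.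
   Context: An impulse response $g:\mathbb{Z}_{\ge0}\to\mathbb{R}$ is an opponent process if there is a time $\tau_0$ with $g(\tau)>0$ for $\tau<\tau_0$ and $g(\tau)\le 0$ for $\tau\ge\tau_0$. It is a linearly progressing opponent process (LPOP) if in addition there is $\alpha\in[0,1)$ with $g(t+1)\le\alpha\,g(t)$ for all $t<\tau_0-1$ and $|g(t+1)|\ge\alpha\,|g(t)|$ for all $t\ge\tau_0$. Doses are required to be nonnegative. The minimum effective dose (MED) at time $t$ is the smallest nonnegative dose $u_t$ (given the past doses) that does not cause $y_{t+1}<y_{\min}$; equivalently it yields $y_{t+1}=y_{\min}$, or it equals $0$ when dose $0$ already yields $y_{t+1}\ge y_{\min}$. *)

theory Defs
  imports Complex_Main
begin

definition opponent_process :: "(nat \<Rightarrow> real) \<Rightarrow> nat \<Rightarrow> bool" where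
  "opponent_process g tau0 \<longleftrightarrow>
     (\<forall>\<tau>. \<tau> < tau0 \<longrightarrow> g \<tau> > 0) \<and> (\<forall>\<tau>. \<tau> \<ge> tau0 \<longrightarrow> g \<tau> \<le> 0)"

text \<open>Linearly progressing opponent process (LPOP) with switching time tau0 and constant alpha.
  The condition t < tau0 - 1 is written t + 1 < tau0.\<close>
definition lpop :: "(nat \<Rightarrow> real) \<Rightarrow> nat \<Rightarrow> real \<Rightarrow> bool" where
  "lpop g tau0 \<alpha> \<longleftrightarrow> opponent_process g tau0 \<and> 0 \<le> \<alpha> \<and> \<alpha> < 1 \<and>
     (\<forall>t. t + 1 < tau0 \<longrightarrow> g (t + 1) \<le> \<alpha> * g t) \<and>
     (\<forall>t. t \<ge> tau0 \<longrightarrow> \<bar>g (t + 1)\<bar> \<ge> \<alpha> * \<bar>g t\<bar>)"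

fun wellbeing :: "(nat \<Rightarrow> real) \<Rightarrow> (nat \<Rightarrow> real) \<Rightarrow> (nat \<Rightarrow> real) \<Rightarrow> nat \<Rightarrow> real" where
  "wellbeing g ynat u 0 = ynat 0"
| "wellbeing g ynat u (Suc t) = (\<Sum>k\<le>t. g k * u (t - k)) + ynat (Suc t)"

fun med_list :: "(nat \<Rightarrow> real) \<Rightarrow> (nat \<Rightarrow> real) \<Rightarrow> real \<Rightarrow> nat \<Rightarrow> real list" where
  "med_list g ynat ymin 0 = []"
| "med_list g ynat ymin (Suc t) =
     (let us = med_list g ynat ymin t in
      us @ [max 0 ((ymin - ynat (Suc t) - (\<Sum>k\<in>{1..t}. g k * us ! (t - k))) / g 0)])"

definition umed :: "(nat \<Rightarrow> real) \<Rightarrow> (nat \<Rightarrow> real) \<Rightarrow> real \<Rightarrow> nat \<Rightarrow> real" where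
  "umed g ynat ymin t = med_list g ynat ymin (Suc t) ! t"

end

theory Submission
  imports Defs
begin

lemma med_len: "length (med_list g ynat ymin t) = t"
  by (induction t) (simp_all add: Let_def)

lemma med_prefix: "i < t \<Longrightarrow> med_list g ynat ymin t ! i = umed g ynat ymin i"
proof (induction t)
  case 0 then show ?case by simp
next
  case (Suc t)
  show ?case
  proof (cases "i < t")
    case True
    then show ?thesis using Suc by (simp add: Let_def nth_append med_len)
  next
    case False
    then have "i = t" using Suc.prems by simp
    then show ?thesis by (simp add: umed_def)
  qed
qed

lemma umed_eq: "umed g ynat ymin t =
  max 0 ((ymin - ynat (Suc t) - (\<Sum>k\<in>{1..t}. g k * umed g ynat ymin (t - k))) / g 0)"
proof -
  have "(\<Sum>k\<in>{1..t}. g k * med_list g ynat ymin t ! (t - k)) =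
        (\<Sum>k\<in>{1..t}. g k * umed g ynat ymin (t - k))"
    by (rule sum.cong) (auto simp: med_prefix)
  then show ?thesis by (simp add: umed_def Let_def nth_append med_len)
qed

lemma wb_split: "wellbeing g ynat u (Suc t) = g 0 * u t + (\<Sum>k\<in>{1..t}. g k * u (t - k)) + ynat (Suc t)"
proof -
  have "{..t} = insert 0 {1..t}" by auto
  then show ?thesis by simp
qed

lemma sum_delta: fixes n m :: nat shows "(\<Sum>j\<le>n. g j * (if n - j = m then (1::real) else 0)) = (if m \<le> n then g (n - m) else 0)"
proof -
  have A: "(\<Sum>j\<in>{j\<in>{..n}. n - j = m}. g j) = (\<Sum>j\<le>n. if n - j = m then g j else 0)"
    by (rule sum.inter_filter) simp
  have "(\<Sum>j\<le>n. g j * (if n - j = m then (1::real) else 0)) = (\<Sum>j\<le>n. if n - j = m then g j else 0)"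
    by (rule sum.cong) auto
  also note A[symmetric]
  also have "{j\<in>{..n}. n - j = m} = (if m \<le> n then {n - m} else {})" by auto
  finally show ?thesis by simp
qed

lemma key_ineq:
  assumes "lpop g tau0 \<alpha>" "j \<ge> 1"
  shows "\<alpha> * g (j - 1) - g j \<ge> 0"
proof -
  from assms(1) have op: "\<And>\<tau>. \<tau> < tau0 \<Longrightarrow> g \<tau> > 0" "\<And>\<tau>. \<tau> \<ge> tau0 \<Longrightarrow> g \<tau> \<le> 0"
    and a0: "0 \<le> \<alpha>"
    and d1: "\<And>t. t + 1 < tau0 \<Longrightarrow> g (t + 1) \<le> \<alpha> * g t"
    and d2: "\<And>t. t \<ge> tau0 \<Longrightarrow> \<bar>g (t + 1)\<bar> \<ge> \<alpha> * \<bar>g t\<bar>"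
    unfolding lpop_def opponent_process_def by auto
  obtain i where j: "j = i + 1" using assms(2) by (metis add.commute le_Suc_ex)
  consider "i + 1 < tau0" | "i + 1 = tau0" | "i \<ge> tau0" by linarith
  then show ?thesis
  proof cases
    case 1 then show ?thesis using d1[of i] j by simp
  next
    case 2
    have "g i > 0" "g j \<le> 0" using op[of i] op(2)[of j] 2 j by auto
    moreover have "j - 1 = i" using j by simp
    ultimately show ?thesis using mult_nonneg_nonneg[OF a0, of "g i"] by simp
  next
    case 3
    have "g i \<le> 0" "g (i+1) \<le> 0" using op(2) 3 by auto
    then show ?thesis using d2[OF 3] j by simp
  qed
qed

theorem theorem1:
  fixes g ynat :: "nat \<Rightarrow> real" and tau0 T :: nat and \<alpha> ymin :: real
  assumes "lpop g tau0 \<alpha>" and "tau0 \<ge> 1" and "T \<ge> 1"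
  shows "(\<forall>t\<in>{1..T}. wellbeing g ynat (umed g ynat ymin) t \<ge> ymin) \<and>
         (\<forall>u'. (\<forall>t<T. u' t \<ge> 0) \<longrightarrow> (\<forall>t\<in>{1..T}. wellbeing g ynat u' t \<ge> ymin) \<longrightarrow>
            (\<Sum>t<T. umed g ynat ymin t) \<le> (\<Sum>t<T. u' t))"
proof -
  let ?M = "umed g ynat ymin"
  have g0: "g 0 > 0" using assms(1,2) unfolding lpop_def opponent_process_def by auto
  have a0: "0 \<le> \<alpha>" "\<alpha> < 1" using assms(1) unfolding lpop_def by auto
  have Mnn: "?M t \<ge> 0" for t by (subst umed_eq) simp
  have Mfeas: "wellbeing g ynat ?M (Suc t) \<ge> ymin" for t
  proof -
    let ?x = "ymin - ynat (Suc t) - (\<Sum>k\<in>{1..t}. g k * ?M (t - k))"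
    have "g 0 * ?M t \<ge> ?x"
    proof -
      have "g 0 * ?M t = g 0 * max 0 (?x / g 0)" by (subst umed_eq) simp
      also have "\<dots> \<ge> g 0 * (?x / g 0)" using g0 by (intro mult_left_mono) auto
      finally show ?thesis using g0 by simp
    qed
    then show ?thesis by (subst wb_split) linarith
  qed
  have lower: "u' k \<ge> ?M k" if "u' k \<ge> 0" "wellbeing g ynat u' (Suc k) \<ge> ymin"
      "\<forall>i<k. u' i = ?M i" for u' k
  proof -
    have s: "(\<Sum>j\<in>{1..k}. g j * u' (k - j)) = (\<Sum>j\<in>{1..k}. g j * ?M (k - j))"
      by (rule sum.cong) (use that(3) in auto)
    let ?x = "ymin - ynat (Suc k) - (\<Sum>j\<in>{1..k}. g j * ?M (k - j))"
    have "g 0 * u' k \<ge> ?x" using that(2) s wb_split[of g ynat u' k] by linarith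
    then have "u' k \<ge> ?x / g 0" using g0 by (simp add: pos_divide_le_eq mult.commute)
    then show ?thesis using that(1) by (subst umed_eq) simp
  qed
  have P: "\<forall>u'. (\<forall>t<T. u' t \<ge> 0) \<longrightarrow> (\<forall>t\<in>{1..T}. wellbeing g ynat u' t \<ge> ymin) \<longrightarrow>
            (\<forall>i<T - m. u' i = ?M i) \<longrightarrow> (\<Sum>t<T. ?M t) \<le> (\<Sum>t<T. u' t)" if "m \<le> T" for m
    using that
  proof (induction m)
    case 0
    show ?case by (auto intro!: sum_mono)
  next
    case (Suc m)
    show ?case
    proof (intro allI impI)
      fix u' :: "nat \<Rightarrow> real"
      assume nn: "\<forall>t<T. u' t \<ge> 0" and fe: "\<forall>t\<in>{1..T}. wellbeing g ynat u' t \<ge> ymin"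
        and ag: "\<forall>i<T - Suc m. u' i = ?M i"
      define k where "k = T - Suc m"
      have kT: "k < T" "Suc k = T - m" using Suc.prems unfolding k_def by auto
      define e where "e = u' k - ?M k"
      have e0: "e \<ge> 0" using lower[of u' k] nn fe ag kT unfolding e_def k_def by auto
      define u'' where "u'' i = u' i + e * (\<alpha> * (if i = Suc k then 1 else 0) - (if i = k then 1 else 0))" for i
      have u''k: "u'' k = ?M k" unfolding u''_def e_def by simp
      have ag'': "\<forall>i<T - m. u'' i = ?M i"
      proof (intro allI impI)
        fix i assume "i < T - m"
        then consider "i < k" | "i = k" using kT by linarith
        then show "u'' i = ?M i"
          by cases (use ag k_def u''k in \<open>auto simp: u''_def\<close>)
      qed
      have nn'': "\<forall>t<T. u'' t \<ge> 0"
      proof (intro allI impI)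
        fix t assume "t < T"
        then show "u'' t \<ge> 0" using nn e0 a0 Mnn[of k] u''k
          by (cases "t = k") (auto simp: u''_def)
      qed
      have wbdiff: "wellbeing g ynat u'' (Suc n) = wellbeing g ynat u' (Suc n)
          + e * (\<alpha> * (if Suc k \<le> n then g (n - Suc k) else 0) - (if k \<le> n then g (n - k) else 0))" for n
      proof -
        have "wellbeing g ynat u'' (Suc n) = (\<Sum>j\<le>n. g j * u' (n - j))
           + e * (\<alpha> * (\<Sum>j\<le>n. g j * (if n - j = Suc k then 1 else 0)) - (\<Sum>j\<le>n. g j * (if n - j = k then 1 else 0)))
           + ynat (Suc n)"
          by (simp add: u''_def algebra_simps sum.distrib sum_distrib_left sum_subtractf)
        then show ?thesis by (simp only: sum_delta) simp
      qed
      have fe'': "\<forall>t\<in>{1..T}. wellbeing g ynat u'' t \<ge> ymin"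
      proof
        fix t assume t: "t \<in> {1..T}"
        then obtain n where n: "t = Suc n" "n < T" by (cases t) auto
        consider "n < k" | "n = k" | "n > k" by linarith
        then show "wellbeing g ynat u'' t \<ge> ymin"
        proof cases
          case 1
          have "wellbeing g ynat u'' (Suc n) = wellbeing g ynat u' (Suc n)"
            using wbdiff[of n] 1 by (simp del: wellbeing.simps)
          moreover have "wellbeing g ynat u' (Suc n) \<ge> ymin" using fe n(2)
            by (auto simp del: wellbeing.simps)
          ultimately show ?thesis using n by (simp del: wellbeing.simps)
        next
          case 2
          have "wellbeing g ynat u'' (Suc k) = wellbeing g ynat ?M (Suc k)"
            unfolding wellbeing.simps
            by (intro arg_cong2[where f="(+)"] sum.cong refl)
               (use ag'' kT in \<open>auto\<close>)
          then show ?thesis using Mfeas[of k] 2 n by simp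
        next
          case 3
          have "\<alpha> * g (n - Suc k) - g (n - k) \<ge> 0"
          proof -
            have "n - k - 1 = n - Suc k" by simp
            moreover have "n - k \<ge> 1" using 3 by simp
            ultimately show ?thesis using key_ineq[OF assms(1), of "n - k"] by metis
          qed
          then have "e * (\<alpha> * g (n - Suc k) - g (n - k)) \<ge> 0" using e0 by simp
          moreover have "wellbeing g ynat u' (Suc n) \<ge> ymin" using fe n(2)
            by (auto simp del: wellbeing.simps)
          ultimately show ?thesis using wbdiff[of n] n 3 by (simp del: wellbeing.simps)
        qed
      qed
      have cost: "(\<Sum>t<T. u'' t) \<le> (\<Sum>t<T. u' t)"
      proof -
        have pt: "u'' t = u' t + (if t = Suc k then e * \<alpha> else 0) - (if t = k then e else 0)" for t
          by (simp add: u''_def)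
        have "(\<Sum>t<T. u'' t) = (\<Sum>t<T. u' t) + (\<Sum>t<T. if t = Suc k then e * \<alpha> else 0) - (\<Sum>t<T. if t = k then e else 0)"
          by (simp only: pt sum.distrib sum_subtractf)
        also have "\<dots> = (\<Sum>t<T. u' t) + (if Suc k < T then e * \<alpha> else 0) - e"
          using kT by simp
        also have "\<dots> \<le> (\<Sum>t<T. u' t)" using e0 a0 mult_left_mono[of \<alpha> 1 e]
          by auto
        finally show ?thesis .
      qed
      have "(\<Sum>t<T. ?M t) \<le> (\<Sum>t<T. u'' t)" using Suc.IH Suc.prems nn'' fe'' ag'' by simp
      then show "(\<Sum>t<T. ?M t) \<le> (\<Sum>t<T. u' t)" using cost by simp
    qed
  qed
  show ?thesis
  proof
    show "\<forall>t\<in>{1..T}. wellbeing g ynat ?M t \<ge> ymin"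
    proof
      fix t assume "t \<in> {1..T}"
      then obtain n where "t = Suc n" by (cases t) auto
      then show "wellbeing g ynat ?M t \<ge> ymin" using Mfeas by simp
    qed
    show "\<forall>u'. (\<forall>t<T. u' t \<ge> 0) \<longrightarrow> (\<forall>t\<in>{1..T}. wellbeing g ynat u' t \<ge> ymin) \<longrightarrow>
            (\<Sum>t<T. ?M t) \<le> (\<Sum>t<T. u' t)"
      using P[of T] by simp
  qed
qed

end
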